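(* Let $p$ be an odd prime, $M$ the sub-add move matrix, and $t,k$ as in the context. (a) If $\Gamma_{M,\,p}$ has no secondary cycles, then $\Gamma_{M,\,p}$ has exactly $\frac{p^2-1}{k}$ primary cycles. (b) If $\Gamma_{M,\,p}$ has secondary cycles, then all of them have a common length $s$ for some $s\in\{t,2t\}$, and $\Gamma_{M,\,p}$ has exactly $\frac{p-1}{s}$ secondary cycles and $\frac{p^2-p}{k}$ primary cycles.
   Context: The sub-add move matrix is $M=\begin{pmatrix}1&-1\\1&1\end{pmatrix}$. $\Gamma_{M,\,p}$ is the directed graph with vertex set $\mathbb Z_p^2$ and arcs $((a,b),(a-b,a+b))$ (mod $p$; loops allowed). Let $t$ be the multiplicative order of $-4$ in $GF(p)$ and $k=4t$ (the $\mathbb Z_p$-order of $M$). A directed cycle is a cycle in the underlying undirected graph such that in the induced directed subgraph every vertex has in- and out-degree $1$; a loop is a directed $1$-cycle, a pair of opposite arcs a directed $2$-cycle. A primary cycle is a directed cycle of length $k$; a secondary cycle is a directed cycle that is neither primary nor a $1$-cycle. *)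

theory Defs
  imports "HOL-Number_Theory.Number_Theory"
begin

definition vertices :: "nat \<Rightarrow> (int \<times> int) set" where
  "vertices p = {0..<int p} \<times> {0..<int p}"

definition arc :: "nat \<Rightarrow> int \<times> int \<Rightarrow> int \<times> int \<Rightarrow> bool" where
  "arc p v w \<longleftrightarrow> v \<in> vertices p \<and>
     w = ((fst v - snd v) mod int p, (fst v + snd v) mod int p)"

text \<open>A directed cycle (given by its vertex set C): C can be traversed cyclically along arcs
  (loop for card 1, pair of opposite arcs for card 2, a cycle of the underlying graph otherwise),
  and in the subgraph induced on C every vertex has in- and out-degree 1.\<close>
definition directed_cycle :: "nat \<Rightarrow> (int \<times> int) set \<Rightarrow> bool" where
  "directed_cycle p C \<longleftrightarrow> C \<subseteq> vertices p \<and>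
     (\<exists>vs. vs \<noteq> [] \<and> distinct vs \<and> set vs = C \<and>
        (\<forall>i < length vs. arc p (vs ! i) (vs ! ((i + 1) mod length vs)))) \<and>
     (\<forall>v \<in> C. card {w \<in> C. arc p v w} = 1 \<and> card {u \<in> C. arc p u v} = 1)"

definition ord_t :: "nat \<Rightarrow> nat" where
  "ord_t p = (LEAST d::nat. 0 < d \<and> [(-4::int) ^ d = 1] (mod int p))"

definition ord_k :: "nat \<Rightarrow> nat" where
  "ord_k p = 4 * ord_t p"

definition primary_cycle :: "nat \<Rightarrow> (int \<times> int) set \<Rightarrow> bool" where
  "primary_cycle p C \<longleftrightarrow> directed_cycle p C \<and> card C = ord_k p"

definition secondary_cycle :: "nat \<Rightarrow> (int \<times> int) set \<Rightarrow> bool" where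
  "secondary_cycle p C \<longleftrightarrow> directed_cycle p C \<and> card C \<noteq> ord_k p \<and> card C \<noteq> 1"

end

theory Submission
  imports Defs
begin

locale psys =
  fixes f :: "'a \<Rightarrow> 'a" and V :: "'a set" and N :: nat
  assumes closed: "\<And>v. v \<in> V \<Longrightarrow> f v \<in> V"
    and Npos: "0 < N" and Nid: "\<And>v. v \<in> V \<Longrightarrow> (f ^^ N) v = v"
begin

definition per :: "'a \<Rightarrow> nat" where
  "per v = (LEAST d. 0 < d \<and> (f ^^ d) v = v)"

definition orb :: "'a \<Rightarrow> 'a set" where
  "orb v = (\<lambda>n. (f ^^ n) v) ` {..<per v}"

lemma pow_closed: "v \<in> V \<Longrightarrow> (f ^^ n) v \<in> V"
  by (induction n) (auto intro: closed)

lemma per_works: "v \<in> V \<Longrightarrow> 0 < per v \<and> (f ^^ per v) v = v"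
  unfolding per_def by (rule LeastI[of _ N]) (use Npos Nid in auto)

lemma per_le: "0 < d \<Longrightarrow> (f ^^ d) v = v \<Longrightarrow> per v \<le> d"
  unfolding per_def by (rule Least_le) auto

lemma pow_mult_per: "v \<in> V \<Longrightarrow> (f ^^ (per v * m)) v = v"
proof (induction m)
  case (Suc m)
  have "(f ^^ (per v * Suc m)) v = (f ^^ per v) ((f ^^ (per v * m)) v)"
    by (simp add: funpow_add add.commute)
  then show ?case using Suc per_works by simp
qed simp

lemma pow_mod: "v \<in> V \<Longrightarrow> (f ^^ n) v = (f ^^ (n mod per v)) v"
proof -
  assume v: "v \<in> V"
  have "n = n mod per v + per v * (n div per v)" by simp
  then have "(f ^^ n) v = (f ^^ (n mod per v)) ((f ^^ (per v * (n div per v))) v)"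
    by (metis funpow_add o_apply)
  then show ?thesis using pow_mult_per[OF v] by simp
qed

lemma per_dvd: "v \<in> V \<Longrightarrow> (f ^^ n) v = v \<longleftrightarrow> per v dvd n"
proof
  assume v: "v \<in> V" and h: "(f ^^ n) v = v"
  show "per v dvd n"
  proof (rule ccontr)
    assume "\<not> per v dvd n"
    then have "0 < n mod per v" by (simp add: dvd_eq_mod_eq_0)
    moreover have "(f ^^ (n mod per v)) v = v" using h pow_mod[OF v] by simp
    ultimately have "per v \<le> n mod per v" by (rule per_le)
    moreover have "n mod per v < per v" using per_works[OF v] by simp
    ultimately show False by simp
  qed
next
  assume "v \<in> V" "per v dvd n"
  then show "(f ^^ n) v = v" using pow_mult_per by (auto elim: dvdE)
qed

lemma pow_inj: assumes v: "v \<in> V" and ij: "i < per v" "j < per v" "(f ^^ i) v = (f ^^ j) v"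
  shows "i = j"
proof (rule ccontr)
  assume "i \<noteq> j"
  then consider "i < j" | "j < i" by linarith
  then show False
  proof cases
    case 1
    have "(f ^^ (per v - j + i)) v = (f ^^ (per v - j)) ((f ^^ i) v)"
      by (simp add: funpow_add)
    also have "\<dots> = (f ^^ (per v - j)) ((f ^^ j) v)" using ij by simp
    also have "\<dots> = (f ^^ (per v - j + j)) v" by (metis funpow_add o_apply)
    also have "\<dots> = v" using ij per_works[OF v] by simp
    finally have "per v \<le> per v - j + i" by (intro per_le) (use 1 ij in auto)
    then show False using 1 ij by linarith
  next
    case 2
    have "(f ^^ (per v - i + j)) v = (f ^^ (per v - i)) ((f ^^ j) v)"
      by (simp add: funpow_add)
    also have "\<dots> = (f ^^ (per v - i)) ((f ^^ i) v)" using ij by simp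
    also have "\<dots> = (f ^^ (per v - i + i)) v" by (metis funpow_add o_apply)
    also have "\<dots> = v" using ij per_works[OF v] by simp
    finally have "per v \<le> per v - i + j" by (intro per_le) (use 2 ij in auto)
    then show False using 2 ij by linarith
  qed
qed

lemma card_orb: "v \<in> V \<Longrightarrow> card (orb v) = per v"
  unfolding orb_def
  by (subst card_image) (auto intro!: inj_onI intro: pow_inj)

lemma finite_orb: "finite (orb v)"
  unfolding orb_def by simp

lemma orb_range: "v \<in> V \<Longrightarrow> orb v = range (\<lambda>n. (f ^^ n) v)"
  unfolding orb_def
proof safe
  fix n assume v: "v \<in> V"
  show "(f ^^ n) v \<in> (\<lambda>n. (f ^^ n) v) ` {..<per v}"
    using pow_mod[OF v, of n] per_works[OF v] by (intro image_eqI[of _ _ "n mod per v"]) auto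
qed auto

lemma orb_sub: "v \<in> V \<Longrightarrow> orb v \<subseteq> V"
  unfolding orb_def using pow_closed by auto

lemma self_orb: "v \<in> V \<Longrightarrow> v \<in> orb v"
  unfolding orb_def using per_works[of v] by (intro image_eqI[of _ _ 0]) auto

lemma orb_mem_eq: assumes v: "v \<in> V" and u: "u \<in> orb v" shows "orb u = orb v"
proof -
  obtain i where ui: "u = (f ^^ i) v" using u orb_range[OF v] by auto
  have uV: "u \<in> V" using ui pow_closed v by simp
  have vdef: "v = (f ^^ (per v * (i+1) - i)) u"
  proof -
    have "1 * (i+1) \<le> per v * (i+1)" using per_works[OF v] by (intro mult_le_mono1) simp
    then have "per v * (i+1) \<ge> i + 1" by simp
    have "(f ^^ (per v * (i+1) - i)) u = (f ^^ (per v * (i+1) - i + i)) v"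
      unfolding ui by (metis funpow_add o_apply)
    also have "\<dots> = (f ^^ (per v * (i+1))) v" using \<open>per v * (i+1) \<ge> i + 1\<close> by simp
    finally show ?thesis using pow_mult_per[OF v, of "i+1"] by simp
  qed
  have rs: "range (\<lambda>n. (f ^^ n) ((f ^^ m) x)) \<subseteq> range (\<lambda>n. (f ^^ n) x)" for m x
  proof
    fix y assume "y \<in> range (\<lambda>n. (f ^^ n) ((f ^^ m) x))"
    then obtain n where "y = (f ^^ n) ((f ^^ m) x)" by auto
    then have "y = (f ^^ (n + m)) x" by (metis funpow_add o_apply)
    then show "y \<in> range (\<lambda>n. (f ^^ n) x)" by auto
  qed
  show ?thesis
  proof
    show "orb u \<subseteq> orb v"
      by (simp only: orb_range[OF uV] orb_range[OF v]) (metis rs ui)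
    show "orb v \<subseteq> orb u"
      by (simp only: orb_range[OF uV] orb_range[OF v]) (metis rs vdef)
  qed
qed

lemma orb_disj: "v \<in> V \<Longrightarrow> u \<in> V \<Longrightarrow> orb u \<noteq> orb v \<Longrightarrow> orb u \<inter> orb v = {}"
  using orb_mem_eq orb_sub by blast

lemma per_orb: "v \<in> V \<Longrightarrow> u \<in> orb v \<Longrightarrow> per u = per v"
  using orb_mem_eq card_orb orb_sub by (metis subsetD)

lemma f_inj: "u \<in> V \<Longrightarrow> v \<in> V \<Longrightarrow> f u = f v \<Longrightarrow> u = v"
proof -
  assume a: "u \<in> V" "v \<in> V" "f u = f v"
  have "N = Suc (N - 1)" using Npos by simp
  then have "\<And>x. (f ^^ N) x = (f ^^ (N - 1)) (f x)" by (metis funpow_Suc_right o_apply)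
  then show ?thesis using a Nid by metis
qed

lemma count_orbs:
  assumes W: "W \<subseteq> V" "finite V" and cl: "\<And>v u. v \<in> W \<Longrightarrow> u \<in> orb v \<Longrightarrow> u \<in> W"
    and m: "\<And>v. v \<in> W \<Longrightarrow> per v = m"
  shows "m * card (orb ` W) = card W"
proof -
  have U: "\<Union> (orb ` W) = W" using cl self_orb W by blast
  have h1: "finite (orb ` W)" using W finite_subset by (metis finite_imageI)
  have h2: "finite (\<Union> (orb ` W))" using U W finite_subset by metis
  have h3: "card c = m" if cW: "c \<in> orb ` W" for c
  proof -
    obtain v where "v \<in> W" "c = orb v" using cW by auto
    then show "card c = m" using card_orb[of v] m[of v] W by auto
  qed
  have h4: "c1 \<inter> c2 = {}" if "c1 \<in> orb ` W" "c2 \<in> orb ` W" "c1 \<noteq> c2" for c1 c2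
    using orb_disj W that by blast
  have "m * card (orb ` W) = card (\<Union> (orb ` W))"
    by (rule card_partition[OF h1 h2]) (use h3 h4 in auto)
  then show ?thesis using U by simp
qed


lemma dc_to_orb:
  assumes ne: "vs \<noteq> []" and di: "distinct vs"
    and ar: "\<forall>i<length vs. vs ! i \<in> V \<and> vs ! ((i + 1) mod length vs) = f (vs ! i)"
  shows "\<exists>v\<in>V. set vs = orb v"
proof -
  define L where "L = length vs"
  define v where "v = vs ! 0"
  have L0: "0 < L" using ne L_def by simp
  have vV: "v \<in> V" using ar L0 unfolding v_def L_def by blast
  have el: "vs ! i = (f ^^ i) v" if "i < L" for i
    using that
  proof (induction i)
    case 0 then show ?case by (simp add: v_def)
  next
    case (Suc i)
    then have "vs ! (Suc i) = vs ! ((i + 1) mod L)" by simp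
    also have "\<dots> = f (vs ! i)" using ar Suc(2) unfolding L_def by (metis Suc_lessD)
    finally show ?case using Suc by simp
  qed
  have "(f ^^ L) v = f ((f ^^ (L - 1)) v)"
    using L0 by (cases L) simp_all
  also have "\<dots> = f (vs ! (L - 1))" using el L0 by simp
  also have "\<dots> = v"
  proof -
    have a1: "L - 1 < length vs" using L0 L_def by simp
    have "vs ! ((L - 1 + 1) mod length vs) = f (vs ! (L-1))" using ar a1 by blast
    then show ?thesis using L0 unfolding L_def v_def by simp
  qed
  finally have fL: "(f ^^ L) v = v" .
  have pl: "per v \<le> L" using per_le[OF L0 fL] .
  have pL: "per v = L"
  proof (rule ccontr)
    assume "per v \<noteq> L"
    then have "per v < L" using pl by simp
    then have "vs ! (per v) = v" using el[of "per v"] per_works[OF vV] by simp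
    then have "vs ! (per v) = vs ! 0" unfolding v_def .
    then have "per v = 0" using nth_eq_iff_index_eq[OF di, of "per v" 0] \<open>per v < L\<close> L0
      unfolding L_def by simp
    then show False using per_works[OF vV] by simp
  qed
  have "set vs = (\<lambda>i. vs ! i) ` {..<L}" unfolding L_def set_conv_nth
    by blast
  also have "\<dots> = orb v" unfolding orb_def pL by (intro image_cong refl) (simp add: el)
  finally show ?thesis using vV by blast
qed

lemma orb_to_dc:
  assumes vV: "v \<in> V"
  shows "\<exists>vs. vs \<noteq> [] \<and> distinct vs \<and> set vs = orb v \<and>
     (\<forall>i<length vs. vs ! i \<in> V \<and> vs ! ((i + 1) mod length vs) = f (vs ! i))"
proof (intro exI conjI)
  define vs where "vs = map (\<lambda>i. (f ^^ i) v) [0..<per v]"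
  show "vs \<noteq> []" using per_works[OF vV] by (simp add: vs_def)
  show "distinct vs" unfolding vs_def distinct_map
    by (auto intro!: inj_onI intro: pow_inj[OF vV])
  show "set vs = orb v" by (simp add: vs_def orb_def atLeast0LessThan)
  show "\<forall>i<length vs. vs ! i \<in> V \<and> vs ! ((i + 1) mod length vs) = f (vs ! i)"
  proof (intro allI impI conjI)
    fix i assume i: "i < length vs"
    then have ip: "i < per v" by (simp add: vs_def)
    show "vs ! i \<in> V" using ip pow_closed[OF vV] by (simp add: vs_def)
    have "vs ! ((i + 1) mod length vs) = (f ^^ ((i+1) mod per v)) v"
      using per_works[OF vV] by (simp add: vs_def)
    also have "\<dots> = (f ^^ (i+1)) v" using pow_mod[OF vV] by simp
    also have "\<dots> = f (vs ! i)" using ip by (simp add: vs_def)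
    finally show "vs ! ((i + 1) mod length vs) = f (vs ! i)" .
  qed
qed

lemma orb_deg:
  assumes vV: "v \<in> V" and x: "x \<in> orb v"
  shows "card {w \<in> orb v. x \<in> V \<and> w = f x} = 1 \<and> card {u \<in> orb v. u \<in> V \<and> x = f u} = 1"
proof
  obtain n where xn: "x = (f ^^ n) v" using x orb_range[OF vV] by auto
  have xV: "x \<in> V" using xn pow_closed[OF vV] by simp
  have "f x = (f ^^ Suc n) v" using xn by simp
  then have "f x \<in> orb v" using orb_range[OF vV] by (metis rangeI)
  then have "{w \<in> orb v. x \<in> V \<and> w = f x} = {f x}" using xV by auto
  then show "card {w \<in> orb v. x \<in> V \<and> w = f x} = 1" by simp
  define m where "m = n + per v - 1"
  have mS: "Suc m = n + per v" using per_works[OF vV] by (simp add: m_def)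
  define u0 where "u0 = (f ^^ m) v"
  have u0: "u0 \<in> orb v" using orb_range[OF vV] u0_def by (metis rangeI)
  have u0V: "u0 \<in> V" using u0_def pow_closed[OF vV] by simp
  have "f u0 = (f ^^ (Suc m)) v" unfolding u0_def by simp
  also have "\<dots> = (f ^^ (n + per v)) v" unfolding mS ..
  also have "\<dots> = (f ^^ n) ((f ^^ per v) v)" by (simp add: funpow_add)
  also have "\<dots> = x" using per_works[OF vV] xn by simp
  finally have fu0: "f u0 = x" .
  have "{u \<in> orb v. u \<in> V \<and> x = f u} = {u0}"
  proof
    show "{u0} \<subseteq> {u \<in> orb v. u \<in> V \<and> x = f u}" using u0 u0V fu0 by simp
    show "{u \<in> orb v. u \<in> V \<and> x = f u} \<subseteq> {u0}"
    proof
      fix u assume "u \<in> {u \<in> orb v. u \<in> V \<and> x = f u}"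
      then have "u \<in> V" "f u = f u0" using fu0 by auto
      then show "u \<in> {u0}" using f_inj[OF _ u0V] by simp
    qed
  qed
  then show "card {u \<in> orb v. u \<in> V \<and> x = f u} = 1" by simp
qed

lemma dc_char:
  "(C \<subseteq> V \<and> (\<exists>vs. vs \<noteq> [] \<and> distinct vs \<and> set vs = C \<and>
      (\<forall>i<length vs. vs ! i \<in> V \<and> vs ! ((i + 1) mod length vs) = f (vs ! i))) \<and>
    (\<forall>v\<in>C. card {w \<in> C. v \<in> V \<and> w = f v} = 1 \<and> card {u \<in> C. u \<in> V \<and> v = f u} = 1))
   \<longleftrightarrow> (\<exists>v\<in>V. C = orb v)"
proof
  assume "C \<subseteq> V \<and> (\<exists>vs. vs \<noteq> [] \<and> distinct vs \<and> set vs = C \<and>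
      (\<forall>i<length vs. vs ! i \<in> V \<and> vs ! ((i + 1) mod length vs) = f (vs ! i))) \<and>
    (\<forall>v\<in>C. card {w \<in> C. v \<in> V \<and> w = f v} = 1 \<and> card {u \<in> C. u \<in> V \<and> v = f u} = 1)"
  then obtain vs where "vs \<noteq> []" "distinct vs" "set vs = C"
      "\<forall>i<length vs. vs ! i \<in> V \<and> vs ! ((i + 1) mod length vs) = f (vs ! i)" by blast
  then show "\<exists>v\<in>V. C = orb v" using dc_to_orb[of vs] by simp
next
  assume "\<exists>v\<in>V. C = orb v"
  then obtain v where "v \<in> V" "C = orb v" by blast
  then show "C \<subseteq> V \<and> (\<exists>vs. vs \<noteq> [] \<and> distinct vs \<and> set vs = C \<and>
      (\<forall>i<length vs. vs ! i \<in> V \<and> vs ! ((i + 1) mod length vs) = f (vs ! i))) \<and>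
    (\<forall>v\<in>C. card {w \<in> C. v \<in> V \<and> w = f v} = 1 \<and> card {u \<in> C. u \<in> V \<and> v = f u} = 1)"
  proof (intro conjI)
    show "C \<subseteq> V" using orb_sub \<open>v \<in> V\<close> \<open>C = orb v\<close> by simp
    show "\<exists>vs. vs \<noteq> [] \<and> distinct vs \<and> set vs = C \<and>
      (\<forall>i<length vs. vs ! i \<in> V \<and> vs ! ((i + 1) mod length vs) = f (vs ! i))"
      using orb_to_dc[of v] \<open>v \<in> V\<close> \<open>C = orb v\<close> by simp
    show "\<forall>x\<in>C. card {w \<in> C. x \<in> V \<and> w = f x} = 1 \<and> card {u \<in> C. u \<in> V \<and> x = f u} = 1"
      using orb_deg[of v] \<open>v \<in> V\<close> \<open>C = orb v\<close> by simp
  qed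
qed

end

definition fp :: "nat \<Rightarrow> int \<times> int \<Rightarrow> int \<times> int" where
  "fp p v = ((fst v - snd v) mod int p, (fst v + snd v) mod int p)"

lemma arc_eq: "arc p v w \<longleftrightarrow> v \<in> vertices p \<and> w = fp p v"
  by (simp add: arc_def fp_def)

definition stp :: "int \<times> int \<Rightarrow> int \<times> int" where
  "stp v = (fst v - snd v, fst v + snd v)"

definition md :: "nat \<Rightarrow> int \<times> int \<Rightarrow> int \<times> int" where
  "md p v = (fst v mod int p, snd v mod int p)"

lemma fp_md: "fp p v = md p (stp v)"
  by (simp add: fp_def md_def stp_def)

lemma md_stp_md: "md p (stp (md p v)) = md p (stp v)"
  by (simp add: md_def stp_def mod_diff_eq mod_add_eq)

lemma md_pow: "md p ((stp ^^ n) (md p v)) = md p ((stp ^^ n) v)"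
proof (induction n)
  case 0 then show ?case by (simp add: md_def)
next
  case (Suc n)
  have "md p ((stp ^^ Suc n) (md p v)) = md p (stp (md p ((stp ^^ n) (md p v))))"
    by (simp add: md_stp_md)
  also have "\<dots> = md p (stp (md p ((stp ^^ n) v)))" using Suc by simp
  also have "\<dots> = md p ((stp ^^ Suc n) v)" by (simp add: md_stp_md)
  finally show ?case .
qed

lemma md_id: "v \<in> vertices p \<Longrightarrow> md p v = v"
  by (cases v) (simp add: md_def vertices_def)

lemma fp_pow: "v \<in> vertices p \<Longrightarrow> (fp p ^^ n) v = md p ((stp ^^ n) v)"
proof (induction n)
  case 0 then show ?case by (simp add: md_id)
next
  case (Suc n)
  then show ?case by (simp add: fp_md md_stp_md)
qed

lemma stp4: "(stp ^^ 4) v = (-4 * fst v, -4 * snd v)"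
  by (simp add: eval_nat_numeral stp_def algebra_simps)

lemma stp2: "(stp ^^ 2) v = (-2 * snd v, 2 * fst v)"
  by (simp add: eval_nat_numeral stp_def algebra_simps)

lemma stp4m: "(stp ^^ (4 * m)) v = ((-4) ^ m * fst v, (-4) ^ m * snd v)"
proof (induction m)
  case 0 then show ?case by simp
next
  case (Suc m)
  have "(stp ^^ (4 * Suc m)) v = (stp ^^ 4) ((stp ^^ (4 * m)) v)"
    by (metis funpow_add mult_Suc_right o_apply)
  then show ?case using Suc by (simp add: stp4)
qed

lemma stp_lin: "(stp ^^ n) (c * a, c * b) = (c * fst ((stp ^^ n) (a, b)), c * snd ((stp ^^ n) (a, b)))"
proof (induction n)
  case 0 then show ?case by simp
next
  case (Suc n)
  then show ?case by (simp add: stp_def algebra_simps)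
qed


locale oddp =
  fixes p :: nat
  assumes pr: "prime p" and od: "odd p"
begin

abbreviation "P \<equiv> int p"
abbreviation "t \<equiv> ord_t p"

lemma p3: "p \<ge> 3"
  using pr od prime_ge_2_nat[OF pr] by (metis One_nat_def Suc_1 Suc_leI dvd_refl le_antisym not_less_eq_eq numeral_3_eq_3)

lemma Ppr: "prime P" using pr by simp

lemma ex_t: "\<exists>d::nat. 0 < d \<and> [(-4::int) ^ d = 1] (mod P)"
proof -
  have nd: "\<not> p dvd 4"
  proof
    assume "p dvd 4"
    then have "p dvd 2 * 2" by simp
    then have "p dvd 2" using pr prime_dvd_mult_iff by blast
    then show False using p3 dvd_imp_le[of p 2] by simp
  qed
  have "[4 ^ (p - 1) = 1] (mod p)" using fermat_theorem[OF pr nd] .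
  then have c: "[(4::int) ^ (p - 1) = 1] (mod P)" using cong_int_iff[of "4 ^ (p-1)" 1 p] by simp
  have "(-4::int) ^ (2 * (p - 1)) = (4 ^ (p - 1)) ^ 2"
  proof -
    have "(-4::int) ^ (2 * (p - 1)) = ((-4) ^ 2) ^ (p - 1)" by (simp add: power_mult)
    also have "\<dots> = (4 ^ 2) ^ (p - 1)" by (simp only: power2_minus)
    also have "\<dots> = (4 ^ (p - 1)) ^ 2" by (metis power_mult mult.commute)
    finally show ?thesis .
  qed
  moreover have "[((4::int) ^ (p - 1)) ^ 2 = 1 ^ 2] (mod P)" using cong_pow[OF c] .
  ultimately have "[(-4::int) ^ (2 * (p - 1)) = 1] (mod P)" by simp
  moreover have "0 < 2 * (p - 1)" using p3 by simp
  ultimately show ?thesis by blast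
qed

lemma t_works: "0 < t \<and> [(-4::int) ^ t = 1] (mod P)"
  unfolding ord_t_def by (rule LeastI_ex) (rule ex_t)

lemma t_dvd: assumes "[(-4::int) ^ n = 1] (mod P)" shows "t dvd n"
proof (rule ccontr)
  assume nd: "\<not> t dvd n"
  define r where "r = n mod t"
  have r0: "0 < r" using nd by (simp add: r_def dvd_eq_mod_eq_0)
  have rt: "r < t" using t_works by (simp add: r_def)
  have "(-4::int) ^ n = ((-4) ^ t) ^ (n div t) * (-4) ^ r"
    by (simp add: r_def power_mult[symmetric] power_add[symmetric])
  moreover have "[((-4::int) ^ t) ^ (n div t) * (-4) ^ r = 1 ^ (n div t) * (-4) ^ r] (mod P)"
    using t_works by (intro cong_mult cong_pow cong_refl) auto
  ultimately have "[(-4::int) ^ r = 1] (mod P)" using assms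
    by (metis cong_sym cong_trans power_one mult_1)
  then have "t \<le> r" unfolding ord_t_def using r0 by (intro Least_le) simp
  then show False using rt by simp
qed

abbreviation "V \<equiv> vertices p"

lemma finV: "finite V" by (simp add: vertices_def)

lemma cardV: "card V = p ^ 2" by (simp add: vertices_def power2_eq_square)

lemma closedV: "v \<in> V \<Longrightarrow> fp p v \<in> V"
  using p3 by (simp add: fp_def vertices_def)

lemma fp4m: "v \<in> V \<Longrightarrow> (fp p ^^ (4 * m)) v = (((-4) ^ m * fst v) mod P, ((-4) ^ m * snd v) mod P)"
  by (simp add: fp_pow stp4m md_def)

lemma Nid: "v \<in> V \<Longrightarrow> (fp p ^^ (4 * t)) v = v"
proof -
  assume v: "v \<in> V"
  have "[(-4) ^ t * x = 1 * x] (mod P)" for x :: int using t_works by (intro cong_mult cong_refl) auto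
  then have "((-4) ^ t * x) mod P = x mod P" for x :: int unfolding cong_def by simp
  then show ?thesis using fp4m[OF v] md_id[OF v] by (simp add: md_def)
qed

sublocale ps: psys "fp p" V "4 * t"
  using closedV Nid t_works by unfold_locales auto


lemma cancel: assumes "[x * a = a] (mod P)" "0 < a" "a < P" shows "[x = 1] (mod P)"
proof -
  have "\<not> P dvd a" using assms(2,3) zdvd_not_zless by auto
  then have "coprime a P" using Ppr prime_imp_coprime coprime_commute by blast
  then show ?thesis using assms(1) cong_mult_rcancel[of a P x 1] by simp
qed

lemma L2: assumes v: "v \<in> V" "v \<noteq> (0,0)" and h: "(fp p ^^ (4 * m)) v = v" shows "t dvd m"
proof -
  obtain a b where ab: "v = (a, b)" by (cases v)
  have rng: "0 \<le> a" "a < P" "0 \<le> b" "b < P" using v ab by (auto simp: vertices_def)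
  have "(((-4) ^ m * a) mod P, ((-4) ^ m * b) mod P) = (a, b)"
    using h fp4m[OF v(1), of m] unfolding ab by simp
  then have ea: "((-4) ^ m * a) mod P = a" and eb: "((-4) ^ m * b) mod P = b" by simp_all
  have ca: "[(-4) ^ m * a = a] (mod P)" using ea rng unfolding cong_def by simp
  have cb: "[(-4) ^ m * b = b] (mod P)" using eb rng unfolding cong_def by simp
  have "a \<noteq> 0 \<or> b \<noteq> 0" using v ab by auto
  then have "[(-4::int) ^ m = 1] (mod P)"
  proof
    assume "a \<noteq> 0" then show ?thesis using cancel[OF ca] rng by simp
  next
    assume "b \<noteq> 0" then show ?thesis using cancel[OF cb] rng by simp
  qed
  then show ?thesis by (rule t_dvd)
qed

lemma L3: assumes v: "v \<in> V" and h: "fp p v = v" shows "v = (0,0)"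
proof -
  obtain a b where ab: "v = (a, b)" by (cases v)
  have rng: "0 \<le> a" "a < P" "0 \<le> b" "b < P" using v ab by (auto simp: vertices_def)
  have "((a - b) mod P, (a + b) mod P) = (a, b)" using h unfolding ab fp_def by simp
  then have e1: "(a - b) mod P = a" and e2: "(a + b) mod P = b" by simp_all
  have "(a - b) mod P = a mod P" using e1 rng by simp
  then have "P dvd (a - b) - a" using mod_eq_dvd_iff by blast
  then have "P dvd - b" by simp
  then have "P dvd b" by (simp only: dvd_minus_iff)
  then have "b mod P = 0" by simp
  then have b0: "b = 0" using rng by simp
  then have "a = 0" using e2 rng by simp
  then show ?thesis using ab b0 by simp
qed

lemma per1: "v \<in> V \<Longrightarrow> ps.per v = 1 \<longleftrightarrow> v = (0,0)"
proof
  assume v: "v \<in> V" and "ps.per v = 1"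
  then have "(fp p ^^ 1) v = v" using ps.per_works by metis
  then show "v = (0,0)" using L3[OF v] by simp
next
  assume v: "v \<in> V" and "v = (0,0)"
  then have "fp p v = v" by (simp add: fp_def)
  then have "ps.per v \<le> 1" using ps.per_le[of 1 v] by simp
  then show "ps.per v = 1" using ps.per_works[OF v] by simp
qed

definition E where "E = {v \<in> V. v \<noteq> (0,0) \<and> (fp p ^^ (2 * t)) v = v}"

lemma per_form: assumes v: "v \<in> V" "v \<noteq> (0,0)"
  shows "\<exists>e. ps.per v = t * e \<and> e dvd 4"
proof -
  have d4: "ps.per v dvd 4 * t" using ps.per_dvd[OF v(1), of "4 * t"] ps.Nid[OF v(1)] by simp
  have "(fp p ^^ (4 * ps.per v)) v = v" using ps.per_dvd[OF v(1), of "4 * ps.per v"] by simp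
  then have "t dvd ps.per v" using L2[OF v] by simp
  then obtain e where e: "ps.per v = t * e" by (elim dvdE) blast
  then have "t * e dvd t * 4" using d4 by (simp add: mult.commute)
  then have "e dvd 4" using t_works by simp
  then show ?thesis using e by blast
qed

lemma dvd4: "(e::nat) dvd 4 \<Longrightarrow> e = 1 \<or> e = 2 \<or> e = 4"
proof -
  assume h: "e dvd 4"
  have "e \<le> 4" using dvd_imp_le[OF h] by simp
  moreover have "e \<noteq> 0" using h by (intro notI) simp
  moreover have "e \<noteq> 3" using h by (intro notI) simp
  ultimately show ?thesis by linarith
qed

lemma classA: assumes v: "v \<in> V" "v \<noteq> (0,0)"
  shows "ps.per v \<noteq> 4 * t \<longleftrightarrow> v \<in> E"
proof -
  obtain e where e: "ps.per v = t * e" "e dvd 4" using per_form[OF v] by blast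
  have t0: "t > 0" using t_works by simp
  have "v \<in> E \<longleftrightarrow> ps.per v dvd 2 * t" unfolding E_def using v ps.per_dvd[OF v(1)] by auto
  also have "\<dots> \<longleftrightarrow> e = 1 \<or> e = 2" using dvd4[OF e(2)] e(1) t0 by auto
  also have "\<dots> \<longleftrightarrow> ps.per v \<noteq> 4 * t" using dvd4[OF e(2)] e(1) t0 by auto
  finally show ?thesis by simp
qed

lemma classB: assumes v: "v \<in> E" shows "ps.per v = t \<or> ps.per v = 2 * t"
proof -
  have v': "v \<in> V" "v \<noteq> (0,0)" using v by (auto simp: E_def)
  obtain e where e: "ps.per v = t * e" "e dvd 4" using per_form[OF v'] by blast
  have "ps.per v \<noteq> 4 * t" using classA[OF v'] v by simp
  then show ?thesis using dvd4[OF e(2)] e(1) by auto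
qed

lemma E_even: "even t \<Longrightarrow> E = {}"
proof (rule ccontr)
  assume "even t" "E \<noteq> {}"
  then obtain v where v: "v \<in> E" by blast
  obtain j where j: "t = 2 * j" using \<open>even t\<close> by blast
  have v': "v \<in> V" "v \<noteq> (0,0)" using v by (auto simp: E_def)
  have "(fp p ^^ (4 * j)) v = v" using v j by (auto simp: E_def)
  then have "t dvd j" using L2[OF v'] by blast
  moreover have "0 < j" "j < t" using j t_works by auto
  ultimately show False by (simp add: nat_dvd_not_less)
qed


definition cst :: int where "cst = 2 * (-4) ^ (t div 2)"

lemma cc: assumes "odd t" shows "[cst * cst = -1] (mod P)"
proof -
  define j where "j = t div 2"
  have tj: "t = Suc (2 * j)" using assms by (simp add: j_def)
  have "cst * cst = 4 * ((-4) ^ j) ^ 2" by (simp add: cst_def j_def power2_eq_square)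
  also have "\<dots> = - ((-4) ^ t)" unfolding tj by (simp add: power_mult[symmetric] mult.commute)
  finally have e: "cst * cst = - ((-4) ^ t)" .
  have "[- ((-4::int) ^ t) = - 1] (mod P)" using t_works cong_minus_minus_iff by blast
  then show ?thesis using e by simp
qed

lemma fp2t: assumes "odd t" "v \<in> V"
  shows "(fp p ^^ (2 * t)) v = ((- cst * snd v) mod P, (cst * fst v) mod P)"
proof -
  define j where "j = t div 2"
  have "t = 2 * j + 1" using assms(1) unfolding j_def by presburger
  then have tj: "2 * t = 4 * j + 2" by simp
  have "(stp ^^ (2 * t)) v = (stp ^^ (4 * j)) ((stp ^^ 2) v)"
    unfolding tj by (metis funpow_add o_apply)
  also have "\<dots> = ((-4) ^ j * (-2 * snd v), (-4) ^ j * (2 * fst v))"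
    by (simp add: stp4m stp2)
  finally show ?thesis using fp_pow[OF assms(2)]
    by (simp add: md_def cst_def j_def algebra_simps)
qed

lemma inE_iff: assumes "odd t" "v \<in> V"
  shows "(fp p ^^ (2 * t)) v = v \<longleftrightarrow> snd v = (cst * fst v) mod P"
proof
  assume "(fp p ^^ (2 * t)) v = v"
  then show "snd v = (cst * fst v) mod P" using fp2t[OF assms] by (metis snd_conv)
next
  assume h: "snd v = (cst * fst v) mod P"
  obtain a b where ab: "v = (a, b)" by (cases v)
  have rng: "0 \<le> a" "a < P" "0 \<le> b" "b < P" using assms(2) unfolding ab by (auto simp: vertices_def)
  have hb: "b = (cst * a) mod P" using h unfolding ab by simp
  have "[- cst * b = - cst * (cst * a)] (mod P)" unfolding hb
    by (intro cong_mult cong_refl) (simp add: cong_def)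
  moreover have "- cst * (cst * a) = - (cst * cst) * a" by simp
  moreover have "[- (cst * cst) * a = - (-1) * a] (mod P)"
    using cc[OF assms(1)] cong_minus_minus_iff[of "cst*cst" "-1" P]
    by (intro cong_mult cong_refl) simp
  ultimately have "[- cst * b = a] (mod P)" by (metis cong_trans minus_minus mult_1)
  then have "(- cst * b) mod P = a" using rng unfolding cong_def by simp
  then show "(fp p ^^ (2 * t)) v = v" using fp2t[OF assms] hb unfolding ab by simp
qed

lemma E_odd: assumes "odd t" shows "E = (\<lambda>a. (a, (cst * a) mod P)) ` {1..<P}"
proof
  show "E \<subseteq> (\<lambda>a. (a, (cst * a) mod P)) ` {1..<P}"
  proof
    fix v assume v: "v \<in> E"
    obtain a b where ab: "v = (a, b)" by (cases v)
    have vV: "v \<in> V" and nz: "v \<noteq> (0,0)" and fv: "(fp p ^^ (2 * t)) v = v" using v by (auto simp: E_def)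
    have rng: "0 \<le> a" "a < P" using vV unfolding ab by (auto simp: vertices_def)
    have hb: "b = (cst * a) mod P" using inE_iff[OF assms vV] fv unfolding ab by simp
    have "a \<noteq> 0" using nz hb unfolding ab by auto
    then have "a \<in> {1..<P}" using rng by simp
    then show "v \<in> (\<lambda>a. (a, (cst * a) mod P)) ` {1..<P}" unfolding ab hb by blast
  qed
  show "(\<lambda>a. (a, (cst * a) mod P)) ` {1..<P} \<subseteq> E"
  proof
    fix v assume "v \<in> (\<lambda>a. (a, (cst * a) mod P)) ` {1..<P}"
    then obtain a where a: "a \<in> {1..<P}" and va: "v = (a, (cst * a) mod P)" by blast
    have vV: "v \<in> V" using a p3 unfolding va by (simp add: vertices_def)
    have "(fp p ^^ (2 * t)) v = v" using inE_iff[OF assms vV] unfolding va by (simp add: mult.commute)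
    moreover have "v \<noteq> (0,0)" using a va by simp
    ultimately show "v \<in> E" using vV by (simp add: E_def)
  qed
qed

lemma cardE: assumes "odd t" shows "card E = p - 1"
proof -
  have "card E = card {1..<P}" unfolding E_odd[OF assms]
    by (rule card_image) (auto intro: inj_onI)
  then show ?thesis using p3 by simp
qed

lemma uniform: assumes "odd t" "u \<in> E" "v \<in> E" shows "ps.per u = ps.per v"
proof -
  obtain x y where xy: "(stp ^^ t) (1, cst) = (x, y)" by (cases "(stp ^^ t) (1, cst)")
  have key: "(fp p ^^ t) w = w \<longleftrightarrow> [x = 1] (mod P) \<and> [y = cst] (mod P)" if w: "w \<in> E" for w
  proof -
    obtain a where a: "a \<in> {1..<P}" and wa: "w = (a, (cst * a) mod P)"
      using w E_odd[OF assms(1)] by blast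
    have wV: "w \<in> V" using w by (simp add: E_def)
    have "w = md p (a * 1, a * cst)" unfolding wa md_def using a by (simp add: mult.commute)
    then have "(fp p ^^ t) w = md p ((stp ^^ t) (md p (a * 1, a * cst)))" using fp_pow[OF wV] by simp
    also have "\<dots> = md p ((stp ^^ t) (a * 1, a * cst))" by (rule md_pow)
    also have "\<dots> = ((a * x) mod P, (a * y) mod P)" unfolding stp_lin xy md_def by simp
    finally have fw: "(fp p ^^ t) w = ((a * x) mod P, (a * y) mod P)" .
    have cop: "coprime a P"
    proof -
      have "\<not> P dvd a" using a zdvd_not_zless by auto
      then show ?thesis using Ppr prime_imp_coprime coprime_commute by blast
    qed
    have "(fp p ^^ t) w = w \<longleftrightarrow> [a * x = a * 1] (mod P) \<and> [a * y = a * cst] (mod P)"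
    proof -
      have "(fp p ^^ t) w = w \<longleftrightarrow> (a * x) mod P = a \<and> (a * y) mod P = (cst * a) mod P"
        using fw wa by auto
      then show ?thesis unfolding cong_def using a by (simp add: mult.commute)
    qed
    also have "\<dots> \<longleftrightarrow> [x = 1] (mod P) \<and> [y = cst] (mod P)"
      using cong_mult_lcancel[OF cop, of x 1] cong_mult_lcancel[OF cop, of y cst] by (simp only:)
    finally show ?thesis .
  qed
  have pt: "ps.per w = t \<longleftrightarrow> (fp p ^^ t) w = w" if w: "w \<in> E" for w
  proof -
    have wV: "w \<in> V" using w by (simp add: E_def)
    have t0: "t > 0" using t_works by simp
    show ?thesis
    proof
      assume "ps.per w = t" then show "(fp p ^^ t) w = w" using ps.per_works[OF wV] by simp
    next
      assume "(fp p ^^ t) w = w"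
      then have "ps.per w dvd t" using ps.per_dvd[OF wV] by simp
      then have "ps.per w \<le> t" using t0 by (simp add: dvd_imp_le)
      then show "ps.per w = t" using classB[OF w] t0 by auto
    qed
  qed
  show ?thesis
  proof (cases "[x = 1] (mod P) \<and> [y = cst] (mod P)")
    case True
    then show ?thesis using pt key assms by simp
  next
    case False
    then have "ps.per u \<noteq> t" "ps.per v \<noteq> t" using pt key assms by simp_all
    then show ?thesis using classB assms by metis
  qed
qed


lemma dc_iff: "directed_cycle p C \<longleftrightarrow> (\<exists>v\<in>V. C = ps.orb v)"
  unfolding directed_cycle_def arc_eq by (rule ps.dc_char)

definition Uk where "Uk = {v \<in> V. ps.per v = 4 * t}"

lemma PC: "{C. primary_cycle p C} = ps.orb ` Uk"
proof -
  have "primary_cycle p C \<longleftrightarrow> (\<exists>v\<in>Uk. C = ps.orb v)" for C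
  proof
    assume "primary_cycle p C"
    then obtain v where v: "v \<in> V" "C = ps.orb v" "card C = 4 * t"
      unfolding primary_cycle_def dc_iff ord_k_def by blast
    then have "v \<in> Uk" using ps.card_orb[OF v(1)] by (simp add: Uk_def)
    then show "\<exists>v\<in>Uk. C = ps.orb v" using v by blast
  next
    assume "\<exists>v\<in>Uk. C = ps.orb v"
    then obtain v where v: "v \<in> V" "ps.per v = 4 * t" "C = ps.orb v" by (auto simp: Uk_def)
    have "card C = 4 * t" using ps.card_orb[OF v(1)] v by simp
    then show "primary_cycle p C" unfolding primary_cycle_def dc_iff ord_k_def using v by blast
  qed
  then show ?thesis by blast
qed

lemma E_alt: "E = {v \<in> V. ps.per v \<noteq> 4 * t \<and> ps.per v \<noteq> 1}"
proof -
  have "v \<in> E \<longleftrightarrow> v \<in> V \<and> ps.per v \<noteq> 4 * t \<and> ps.per v \<noteq> 1" for v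
  proof (cases "v \<in> V \<and> v \<noteq> (0,0)")
    case True
    then show ?thesis using classA[of v] per1[of v] by auto
  next
    case False
    then show ?thesis using per1[of v] by (auto simp: E_def)
  qed
  then show ?thesis by blast
qed

lemma SC: "{C. secondary_cycle p C} = ps.orb ` E"
proof -
  have "secondary_cycle p C \<longleftrightarrow> (\<exists>v\<in>E. C = ps.orb v)" for C
  proof
    assume "secondary_cycle p C"
    then obtain v where v: "v \<in> V" "C = ps.orb v" "card C \<noteq> 4 * t" "card C \<noteq> 1"
      unfolding secondary_cycle_def dc_iff ord_k_def by blast
    then have "v \<in> E" using ps.card_orb[OF v(1)] by (simp add: E_alt)
    then show "\<exists>v\<in>E. C = ps.orb v" using v by blast
  next
    assume "\<exists>v\<in>E. C = ps.orb v"
    then obtain v where v: "v \<in> V" "ps.per v \<noteq> 4 * t" "ps.per v \<noteq> 1" "C = ps.orb v"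
      by (auto simp: E_alt)
    have "card C \<noteq> 4 * t" "card C \<noteq> 1" using ps.card_orb[OF v(1)] v by simp_all
    then show "secondary_cycle p C" unfolding secondary_cycle_def dc_iff ord_k_def using v by blast
  qed
  then show ?thesis by blast
qed

lemma EV: "E \<subseteq> V" by (auto simp: E_def)

lemma count_P: "4 * t * card {C. primary_cycle p C} = card Uk"
  unfolding PC
proof (rule ps.count_orbs)
  show "Uk \<subseteq> V" "finite V" by (auto simp: Uk_def finV)
  show "u \<in> Uk" if "v \<in> Uk" "u \<in> ps.orb v" for u v
  proof -
    have vV: "v \<in> V" using that(1) by (simp add: Uk_def)
    have "u \<in> V" using ps.orb_sub[OF vV] that(2) by blast
    moreover have "ps.per u = ps.per v" by (rule ps.per_orb[OF vV that(2)])
    ultimately show ?thesis using that(1) by (simp add: Uk_def)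
  qed
  show "ps.per v = 4 * t" if "v \<in> Uk" for v using that by (simp add: Uk_def)
qed

lemma count_S: assumes "v0 \<in> E" shows "ps.per v0 * card {C. secondary_cycle p C} = card E"
  unfolding SC
proof (rule ps.count_orbs)
  show "E \<subseteq> V" "finite V" by (auto simp: EV finV)
  show "u \<in> E" if "v \<in> E" "u \<in> ps.orb v" for u v
  proof -
    have vV: "v \<in> V" using that(1) EV by blast
    have "u \<in> V" using ps.orb_sub[OF vV] that(2) by blast
    moreover have "ps.per u = ps.per v" by (rule ps.per_orb[OF vV that(2)])
    ultimately show ?thesis using that(1) by (simp add: E_alt)
  qed
  show "ps.per v = ps.per v0" if "v \<in> E" for v
  proof -
    have "odd t" using assms E_even by blast
    then show ?thesis using uniform that assms by blast
  qed
qed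

lemma card_Uk: "card Uk = p ^ 2 - 1 - card E"
proof -
  have t0: "t > 0" using t_works by simp
  have "Uk = V - insert (0,0) E"
  proof -
    have "v \<in> Uk \<longleftrightarrow> v \<in> V - insert (0,0) E" for v
    proof (cases "v \<in> V")
      case vV: True
      show ?thesis
      proof (cases "v = (0,0)")
        case True
        then have "ps.per v = 1" using per1[OF vV] by simp
        then show ?thesis using True t0 by (simp add: Uk_def)
      next
        case False
        have "v \<in> Uk \<longleftrightarrow> ps.per v = 4 * t" using vV by (simp add: Uk_def)
        moreover have "v \<in> V - insert (0,0) E \<longleftrightarrow> v \<notin> E" using vV False by simp
        ultimately show ?thesis using classA[OF vV False] by argo
      qed
    next
      case False
      then show ?thesis by (simp add: Uk_def)
    qed
    then show ?thesis by blast
  qed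
  moreover have sub: "insert (0,0) E \<subseteq> V"
  proof -
    have "(0,0) \<in> V" using p3 by (simp add: vertices_def)
    then show ?thesis using EV by blast
  qed
  moreover have ci: "card (insert (0,0) E) = card E + 1"
  proof -
    have "finite E" using EV finV finite_subset by blast
    moreover have "(0,0) \<notin> E" by (simp add: E_def)
    ultimately show ?thesis by simp
  qed
  moreover have fi: "finite (insert (0,0) E)" using finite_subset[OF sub finV] .
  ultimately have "card Uk = card V - (card E + 1)" using card_Diff_subset[OF fi sub] by simp
  then have "card Uk = p ^ 2 - (card E + 1)" using cardV by simp
  then show ?thesis by simp
qed

end

theorem proposition7p6:
  fixes p :: nat
  assumes "prime p" and "odd p"
  shows "(\<not> (\<exists>C. secondary_cycle p C) \<longrightarrow>
            real (card {C. primary_cycle p C}) = (real p ^ 2 - 1) / real (ord_k p))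
       \<and> ((\<exists>C. secondary_cycle p C) \<longrightarrow>
            (\<exists>s \<in> {ord_t p, 2 * ord_t p}.
               (\<forall>C. secondary_cycle p C \<longrightarrow> card C = s) \<and>
               real (card {C. secondary_cycle p C}) = (real p - 1) / real s \<and>
               real (card {C. primary_cycle p C}) = (real p ^ 2 - real p) / real (ord_k p)))"
proof -
  interpret oddp p using assms by unfold_locales
  have t0: "ord_t p > 0" using t_works by simp
  have k: "ord_k p = 4 * ord_t p" by (simp add: ord_k_def)
  have p1: "p \<ge> 3" using p3 .
  have A: "real (card {C. primary_cycle p C}) = (real p ^ 2 - 1) / real (ord_k p)"
    if nex: "\<not> (\<exists>C. secondary_cycle p C)"
  proof -
    have "E = {}"
    proof (rule ccontr)
      assume "E \<noteq> {}"
      then obtain v where "v \<in> E" by blast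
      then have "ps.orb v \<in> {C. secondary_cycle p C}" unfolding SC by (rule imageI)
      then show False using nex by blast
    qed
    then have "4 * ord_t p * card {C. primary_cycle p C} = p ^ 2 - 1"
      using count_P card_Uk by simp
    then have "real (4 * ord_t p * card {C. primary_cycle p C}) = real (p ^ 2 - 1)" by simp
    moreover have "real (p ^ 2 - 1) = real p ^ 2 - 1" using p1 by (simp add: of_nat_diff)
    ultimately show ?thesis using t0 k by (simp add: field_simps)
  qed
  have B: "\<exists>s \<in> {ord_t p, 2 * ord_t p}.
               (\<forall>C. secondary_cycle p C \<longrightarrow> card C = s) \<and>
               real (card {C. secondary_cycle p C}) = (real p - 1) / real s \<and>
               real (card {C. primary_cycle p C}) = (real p ^ 2 - real p) / real (ord_k p)"
    if hex: "\<exists>C. secondary_cycle p C"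
  proof -
    obtain C0 where "secondary_cycle p C0" using hex by blast
    then have "C0 \<in> ps.orb ` E" using SC by blast
    then obtain v0 where v0: "v0 \<in> E" by blast
    have ot: "odd (ord_t p)" using v0 E_even by blast
    define s where "s = ps.per v0"
    have s: "s \<in> {ord_t p, 2 * ord_t p}" using classB[OF v0] s_def by simp
    have s0: "s > 0" using s t0 by auto
    have cs: "card C = s" if "secondary_cycle p C" for C
    proof -
      have "C \<in> ps.orb ` E" using that SC by blast
      then obtain v where v: "v \<in> E" "C = ps.orb v" by blast
      have vV: "v \<in> V" using v(1) EV by blast
      have "card C = ps.per v" using ps.card_orb[OF vV] v(2) by simp
      also have "\<dots> = s" using uniform[OF ot v(1) v0] s_def by simp
      finally show ?thesis .
    qed
    have "s * card {C. secondary_cycle p C} = p - 1"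
      using count_S[OF v0] cardE[OF ot] s_def by simp
    then have "real (s * card {C. secondary_cycle p C}) = real (p - 1)" by simp
    then have S: "real (card {C. secondary_cycle p C}) = (real p - 1) / real s"
      using s0 p1 by (simp add: of_nat_diff field_simps)
    have "4 * ord_t p * card {C. primary_cycle p C} = p ^ 2 - 1 - (p - 1)"
      using count_P card_Uk cardE[OF ot] by simp
    also have "\<dots> = p ^ 2 - p" using p1 by (simp add: power2_eq_square)
    finally have "real (4 * ord_t p * card {C. primary_cycle p C}) = real (p ^ 2 - p)" by simp
    moreover have "real (p ^ 2 - p) = real p ^ 2 - real p"
      using p1 by (simp add: of_nat_diff power2_eq_square)
    ultimately have Pc: "real (card {C. primary_cycle p C}) = (real p ^ 2 - real p) / real (ord_k p)"
      using t0 k by (simp add: field_simps)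
    show ?thesis using s cs S Pc by blast
  qed
  show ?thesis using A B by blast
qed

end
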